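(* Let $T_1,T_2$ be trees on $X$ and let $Y\subseteq X$. Then for every $t\in\{2,3,\dots\}\cup\{\infty\}$, $$d_{\mathrm{MP}}^t(T_1(Y),T_2(Y))=d_{\mathrm{MP}}^t(T_1|_Y,T_2|_Y)\le d_{\mathrm{MP}}^t(T_1,T_2).$$
   Context: A tree on $X$ is an unrooted tree with leaf set $X$ whose internal vertices have degree at most $3$. For $Y\subseteq X$, $T(Y)$ is the smallest subtree of $T$ containing all leaves in $Y$, and $T|_Y$ is obtained from $T(Y)$ by suppressing all degree-2 vertices. A character on $X$ is a map $f:X\to S$ with $S$ nonempty; it is $t$-state if $|S|=t$. An extension $\bar f$ of $f$ labels all vertices by states, agreeing with $f$ on leaves; $\Delta_{\bar f}(T)$ counts edges with differently labelled endpoints; $l_f(T)=\min_{\bar f}\Delta_{\bar f}(T)$. $d_{\mathrm{MP}}^t(T_1,T_2)=\max_f|l_f(T_1)-l_f(T_2)|$ over all $t$-state characters $f$ on the common leaf set (over all characters if $t=\infty$). *)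

theory Defs
  imports Main "HOL-Library.Extended_Nat"
begin

definition ugraph :: "'v set \<Rightarrow> 'v set set \<Rightarrow> bool" where
  "ugraph V E \<longleftrightarrow> finite V \<and> (\<forall>e\<in>E. \<exists>u v. u \<in> V \<and> v \<in> V \<and> u \<noteq> v \<and> e = {u, v})"

definition upath :: "'v set set \<Rightarrow> 'v list \<Rightarrow> bool" where
  "upath E xs \<longleftrightarrow> xs \<noteq> [] \<and> distinct xs \<and> (\<forall>i. Suc i < length xs \<longrightarrow> {xs ! i, xs ! Suc i} \<in> E)"

definition uconnected :: "'v set \<Rightarrow> 'v set set \<Rightarrow> bool" where
  "uconnected V E \<longleftrightarrow>
     (\<forall>u\<in>V. \<forall>v\<in>V. \<exists>xs. upath E xs \<and> set xs \<subseteq> V \<and> hd xs = u \<and> last xs = v)"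

definition ucycle :: "'v set set \<Rightarrow> 'v list \<Rightarrow> bool" where
  "ucycle E xs \<longleftrightarrow> upath E xs \<and> length xs \<ge> 3 \<and> {last xs, hd xs} \<in> E"

definition utree :: "'v set \<Rightarrow> 'v set set \<Rightarrow> bool" where
  "utree V E \<longleftrightarrow> ugraph V E \<and> V \<noteq> {} \<and> uconnected V E \<and> \<not> (\<exists>xs. ucycle E xs)"

definition degree :: "'v set set \<Rightarrow> 'v \<Rightarrow> nat" where
  "degree E v = card {e \<in> E. v \<in> e}"

text \<open>Leaves: vertices of degree at most 1 (degree 0 only for a one-vertex tree).\<close>
definition leaves :: "'v set \<Rightarrow> 'v set set \<Rightarrow> 'v set" where
  "leaves V E = {v \<in> V. degree E v \<le> 1}"

definition tree_on :: "'v set \<Rightarrow> 'v set \<Rightarrow> 'v set set \<Rightarrow> bool" where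
  "tree_on X V E \<longleftrightarrow> utree V E \<and> leaves V E = X \<and> (\<forall>v \<in> V - X. degree E v \<le> 3)"

text \<open>T(Y): the smallest subtree containing Y, i.e. the union of all paths between leaves in Y.\<close>
definition span_verts :: "'v set set \<Rightarrow> 'v set \<Rightarrow> 'v set" where
  "span_verts E Y = {w. \<exists>xs. upath E xs \<and> hd xs \<in> Y \<and> last xs \<in> Y \<and> w \<in> set xs}"

definition span_edges :: "'v set set \<Rightarrow> 'v set \<Rightarrow> 'v set set" where
  "span_edges E Y = {e. \<exists>xs i. upath E xs \<and> hd xs \<in> Y \<and> last xs \<in> Y \<and> Suc i < length xs
                          \<and> e = {xs ! i, xs ! Suc i}}"

definition suppr_verts :: "'v set \<Rightarrow> 'v set set \<Rightarrow> 'v set" where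
  "suppr_verts V E = {v \<in> V. degree E v \<noteq> 2}"

definition suppr_edges :: "'v set \<Rightarrow> 'v set set \<Rightarrow> 'v set set" where
  "suppr_edges V E = {{u, v} | u v. u \<in> suppr_verts V E \<and> v \<in> suppr_verts V E \<and> u \<noteq> v \<and>
      (\<exists>xs. upath E xs \<and> hd xs = u \<and> last xs = v \<and> (\<forall>w \<in> set (butlast (tl xs)). degree E w = 2))}"

text \<open>T|_Y: T(Y) with all degree-2 vertices suppressed.\<close>
definition restr_verts :: "'v set set \<Rightarrow> 'v set \<Rightarrow> 'v set" where
  "restr_verts E Y = suppr_verts (span_verts E Y) (span_edges E Y)"

definition restr_edges :: "'v set set \<Rightarrow> 'v set \<Rightarrow> 'v set set" where
  "restr_edges E Y = suppr_edges (span_verts E Y) (span_edges E Y)"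

definition changes :: "'v set set \<Rightarrow> ('v \<Rightarrow> 's) \<Rightarrow> nat" where
  "changes E g = card {e \<in> E. \<exists>u v. e = {u, v} \<and> g u \<noteq> g v}"

definition pscore :: "'s set \<Rightarrow> ('v \<Rightarrow> 's) \<Rightarrow> 'v set \<Rightarrow> 'v set set \<Rightarrow> nat" where
  "pscore S f V E = (INF g \<in> {g. g ` V \<subseteq> S \<and> (\<forall>x \<in> leaves V E. g x = f x)}. changes E g)"

text \<open>S is a state set of a t-state character (t = \<infinity>: any nonempty state set).
  States are drawn from nat, which is no loss since parsimony is invariant under renaming states.\<close>
definition t_states :: "enat \<Rightarrow> nat set \<Rightarrow> bool" where
  "t_states t S \<longleftrightarrow> S \<noteq> {} \<and> (case t of enat n \<Rightarrow> finite S \<and> card S = n | \<infinity> \<Rightarrow> True)"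

definition dMP :: "enat \<Rightarrow> 'v set \<Rightarrow> 'v set \<Rightarrow> 'v set set \<Rightarrow> 'v set \<Rightarrow> 'v set set \<Rightarrow> nat" where
  "dMP t X V1 E1 V2 E2 =
     Sup {nat \<bar>int (pscore S f V1 E1) - int (pscore S f V2 E2)\<bar> | S f. t_states t S \<and> f ` X \<subseteq> S}"

end

theory Submission
  imports Defs
begin


definition Q :: "'s set \<Rightarrow> ('v \<Rightarrow> 's) \<Rightarrow> 'v set \<Rightarrow> 'v set set \<Rightarrow> 'v set \<Rightarrow> nat" where
  "Q S f V E C = (INF g \<in> {g. g ` V \<subseteq> S \<and> (\<forall>x \<in> C. g x = f x)}. changes E g)"

lemma pscore_Q: "pscore S f V E = Q S f V E (leaves V E)"
  unfolding pscore_def Q_def ..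

lemma INF_mono_nat:
  fixes k :: "'a \<Rightarrow> nat" and h :: "'b \<Rightarrow> nat"
  assumes "\<And>b. b \<in> B \<Longrightarrow> \<exists>a\<in>A. k a \<le> h b" and "\<And>a. a \<in> A \<Longrightarrow> B \<noteq> {}"
  shows "(INF a\<in>A. k a) \<le> (INF b\<in>B. h b)"
proof (cases "B = {}")
  case True
  then have "A = {}" using assms(2) by auto
  then show ?thesis using True by simp
next
  case False
  have "(INF b\<in>B. h b) \<in> h ` B" using False by (intro Inf_nat_def1) auto
  then obtain b where b: "b \<in> B" "(INF b\<in>B. h b) = h b" by auto
  then obtain a where a: "a \<in> A" "k a \<le> h b" using assms(1) by blast
  have "(INF a\<in>A. k a) \<le> k a" using a(1) by (intro cINF_lower) auto
  then show ?thesis using a b by simp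
qed

lemma INF_attained_nat:
  fixes h :: "'b \<Rightarrow> nat"
  assumes "b0 \<in> B"
  shows "\<exists>b\<in>B. (INF b\<in>B. h b) = h b"
proof -
  have "(INF b\<in>B. h b) \<in> h ` B" using assms by (intro Inf_nat_def1) auto
  then show ?thesis by auto
qed

lemma INF_lower_nat:
  fixes h :: "'b \<Rightarrow> nat"
  shows "b \<in> B \<Longrightarrow> (INF b\<in>B. h b) \<le> h b"
  by (intro cINF_lower) auto

lemma changes_pair: "(\<exists>u v. {a, b} = {u, v} \<and> g u \<noteq> g v) \<longleftrightarrow> g a \<noteq> g b"
  by (auto simp: doubleton_eq_iff)

lemma changes_mono:
  assumes "finite E" "F \<subseteq> E" shows "changes F g \<le> changes E g"
  unfolding changes_def using assms by (intro card_mono) auto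

lemma changes_le_card: "finite E \<Longrightarrow> changes E g \<le> card E"
  unfolding changes_def by (intro card_mono) auto

lemma ugraph_finiteE: assumes "ugraph V E" shows "finite E"
proof -
  have "E \<subseteq> Pow V" using assms unfolding ugraph_def by auto
  moreover have "finite (Pow V)" using assms unfolding ugraph_def by auto
  ultimately show ?thesis by (rule finite_subset)
qed

lemma upath_succ: "upath E xs \<longleftrightarrow> xs \<noteq> [] \<and> distinct xs \<and> successively (\<lambda>a b. {a, b} \<in> E) xs"
  unfolding upath_def successively_conv_nth by blast

lemma upath_mono: "upath E xs \<Longrightarrow> E \<subseteq> F \<Longrightarrow> upath F xs"
  unfolding upath_def by blast

lemma ucycle_mono: "ucycle E xs \<Longrightarrow> E \<subseteq> F \<Longrightarrow> ucycle F xs"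
  unfolding ucycle_def using upath_mono by blast



definition adm where "adm S f V C = {g. g ` V \<subseteq> S \<and> (\<forall>x \<in> C. g x = f x)}"

lemma Q_adm: "Q S f V E C = (INF g \<in> adm S f V C. changes E g)"
  unfolding Q_def adm_def ..

lemma adm_ne: assumes "f ` C \<subseteq> S" "S \<noteq> {}" shows "(\<lambda>x. if x \<in> C then f x else (SOME s. s \<in> S)) \<in> adm S f V C"
  using assms unfolding adm_def by (auto intro: someI_ex)

lemma Q_attained: assumes "f ` C \<subseteq> S" "S \<noteq> {}"
  shows "\<exists>g \<in> adm S f V C. Q S f V E C = changes E g"
  unfolding Q_adm using adm_ne[OF assms] by (rule INF_attained_nat)

lemma Q_le: "g \<in> adm S f V C \<Longrightarrow> Q S f V E C \<le> changes E g"
  unfolding Q_adm by (rule INF_lower_nat)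

lemma Q_ins_ge:
  assumes "f ` C \<subseteq> S" "S \<noteq> {}" "s \<in> S" "x \<notin> C"
  shows "Q S f V E C \<le> Q S (f(x:=s)) V E (insert x C)"
proof -
  obtain g where g: "g \<in> adm S (f(x:=s)) V (insert x C)" "Q S (f(x:=s)) V E (insert x C) = changes E g"
    using Q_attained[of "f(x:=s)" "insert x C" S V E] assms by auto
  have "g \<in> adm S f V C" using g(1) assms(4) unfolding adm_def by auto
  then show ?thesis using g(2) Q_le by metis
qed

lemma changes_upd:
  assumes "finite E" "degree E x \<le> 1"
  shows "changes E (g(x:=s)) \<le> changes E g + 1"
proof -
  let ?ch = "\<lambda>g e. \<exists>u v. e = {u, v} \<and> g u \<noteq> g v"
  have "{e \<in> E. ?ch (g(x:=s)) e} \<subseteq> {e \<in> E. ?ch g e} \<union> {e \<in> E. x \<in> e}"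
  proof
    fix e assume "e \<in> {e \<in> E. ?ch (g(x:=s)) e}"
    then obtain u v where "e \<in> E" "e = {u,v}" "(g(x:=s)) u \<noteq> (g(x:=s)) v" by auto
    then show "e \<in> {e \<in> E. ?ch g e} \<union> {e \<in> E. x \<in> e}"
      by (cases "x \<in> e") auto
  qed
  then have "changes E (g(x:=s)) \<le> card ({e \<in> E. ?ch g e} \<union> {e \<in> E. x \<in> e})"
    unfolding changes_def using assms(1) by (intro card_mono) auto
  also have "\<dots> \<le> changes E g + degree E x"
    unfolding changes_def degree_def by (rule card_Un_le)
  finally show ?thesis using assms(2) by simp
qed

lemma Q_ins_le:
  assumes "f ` C \<subseteq> S" "S \<noteq> {}" "s \<in> S" "finite E" "degree E x \<le> 1"
  shows "Q S (f(x:=s)) V E (insert x C) \<le> Q S f V E C + 1"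
proof -
  obtain g where g: "g \<in> adm S f V C" "Q S f V E C = changes E g"
    using Q_attained[of f C S V E] assms by auto
  have "g(x:=s) \<in> adm S (f(x:=s)) V (insert x C)" using g(1) assms(3) unfolding adm_def by auto
  then have "Q S (f(x:=s)) V E (insert x C) \<le> changes E (g(x:=s))" by (rule Q_le)
  also have "\<dots> \<le> changes E g + 1" using changes_upd assms by metis
  finally show ?thesis using g(2) by simp
qed

lemma Q_ins_eq:
  assumes "f ` C \<subseteq> S" "S \<noteq> {}" "x \<in> V" "x \<notin> C"
  shows "\<exists>s\<in>S. Q S (f(x:=s)) V E (insert x C) = Q S f V E C"
proof -
  obtain g where g: "g \<in> adm S f V C" "Q S f V E C = changes E g"
    using Q_attained[of f C S V E] assms by auto
  have s: "g x \<in> S" using g(1) assms(3) unfolding adm_def by auto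
  have "g \<in> adm S (f(x:=g x)) V (insert x C)" using g(1) unfolding adm_def by auto
  then have "Q S (f(x:=g x)) V E (insert x C) \<le> Q S f V E C" using g(2) Q_le by metis
  moreover have "Q S f V E C \<le> Q S (f(x:=g x)) V E (insert x C)"
    using Q_ins_ge[OF assms(1,2) s assms(4)] .
  ultimately show ?thesis using s by (intro bexI[of _ "g x"]) auto
qed

lemma greedy:
  assumes "finite D" "S \<noteq> {}" "finite E1" "finite E2"
    "\<And>x. x \<in> D \<Longrightarrow> x \<in> V1 \<and> x \<in> V2 \<and> degree E1 x \<le> 1 \<and> degree E2 x \<le> 1"
  shows "D \<inter> C = {} \<Longrightarrow> f ` C \<subseteq> S \<Longrightarrow> \<exists>f'. f' ` (C \<union> D) \<subseteq> S \<and>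
     \<bar>int (Q S f V1 E1 C) - int (Q S f V2 E2 C)\<bar> \<le> \<bar>int (Q S f' V1 E1 (C \<union> D)) - int (Q S f' V2 E2 (C \<union> D))\<bar>"
  using assms(1,5)
proof (induction D arbitrary: C f rule: finite_induct)
  case empty
  then show ?case by (intro exI[of _ f]) auto
next
  case (insert x D)
  have x: "x \<in> V1" "x \<in> V2" "degree E1 x \<le> 1" "degree E2 x \<le> 1" "x \<notin> C" using insert by auto
  let ?a1 = "Q S f V1 E1 C" and ?a2 = "Q S f V2 E2 C"
  let ?b1 = "\<lambda>s. Q S (f(x:=s)) V1 E1 (insert x C)" and ?b2 = "\<lambda>s. Q S (f(x:=s)) V2 E2 (insert x C)"
  have r1: "\<And>s. s \<in> S \<Longrightarrow> ?a1 \<le> ?b1 s \<and> ?b1 s \<le> ?a1 + 1"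
    using Q_ins_ge Q_ins_le insert.prems x assms by metis
  have r2: "\<And>s. s \<in> S \<Longrightarrow> ?a2 \<le> ?b2 s \<and> ?b2 s \<le> ?a2 + 1"
    using Q_ins_ge Q_ins_le insert.prems x assms by metis
  obtain s1 where s1: "s1 \<in> S" "?b1 s1 = ?a1" using Q_ins_eq insert.prems x assms by metis
  obtain s2 where s2: "s2 \<in> S" "?b2 s2 = ?a2" using Q_ins_eq insert.prems x assms by metis
  have "\<exists>s\<in>S. \<bar>int ?a1 - int ?a2\<bar> \<le> \<bar>int (?b1 s) - int (?b2 s)\<bar>"
  proof (cases "?a1 \<ge> ?a2")
    case True
    show ?thesis
    proof (cases "\<exists>s\<in>S. ?b1 s = ?a1 + 1")
      case True
      then obtain s where "s \<in> S" "?b1 s = ?a1 + 1" by auto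
      then show ?thesis using r2[of s] \<open>?a1 \<ge> ?a2\<close> by (intro bexI[of _ s]) auto
    next
      case False
      then have "?b1 s2 = ?a1" using r1[of s2] s2 by force
      then show ?thesis using s2 by (intro bexI[of _ s2]) auto
    qed
  next
    case False
    show ?thesis
    proof (cases "\<exists>s\<in>S. ?b2 s = ?a2 + 1")
      case True
      then obtain s where "s \<in> S" "?b2 s = ?a2 + 1" by auto
      then show ?thesis using r1[of s] False by (intro bexI[of _ s]) auto
    next
      case F2: False
      then have "?b2 s1 = ?a2" using r2[of s1] s1 by force
      then show ?thesis using s1 by (intro bexI[of _ s1]) auto
    qed
  qed
  then obtain s where s: "s \<in> S" "\<bar>int ?a1 - int ?a2\<bar> \<le> \<bar>int (?b1 s) - int (?b2 s)\<bar>" by auto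
  have "D \<inter> insert x C = {}" "(f(x:=s)) ` insert x C \<subseteq> S" using insert s by auto
  have pD: "\<And>y. y \<in> D \<Longrightarrow> y \<in> V1 \<and> y \<in> V2 \<and> degree E1 y \<le> 1 \<and> degree E2 y \<le> 1"
    using insert.prems by auto
  obtain f' where f': "f' ` (insert x C \<union> D) \<subseteq> S"
    "\<bar>int (?b1 s) - int (?b2 s)\<bar> \<le> \<bar>int (Q S f' V1 E1 (insert x C \<union> D)) - int (Q S f' V2 E2 (insert x C \<union> D))\<bar>"
    using insert.IH[OF \<open>D \<inter> insert x C = {}\<close> \<open>(f(x:=s)) ` insert x C \<subseteq> S\<close> pD] by blast
  have e: "insert x C \<union> D = C \<union> insert x D" by auto
  show ?case using f' s(2) unfolding e by (intro exI[of _ f']) auto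
qed



definition agraph where "agraph V E \<longleftrightarrow> ugraph V E \<and> \<not> (\<exists>xs. ucycle E xs)"

lemma succ_in_edge:
  assumes "successively (\<lambda>a b. {a,b} \<in> E) xs" "length xs \<ge> 2" "x \<in> set xs" shows "\<exists>e\<in>E. x \<in> e"
proof -
  obtain i where i: "i < length xs" "xs ! i = x" using assms(3) by (auto simp: in_set_conv_nth)
  show ?thesis
  proof (cases "Suc i < length xs")
    case True then show ?thesis using successively_nth[OF assms(1) True] i by auto
  next
    case False
    then have "Suc (i - 1) < length xs" "Suc (i - 1) = i" using i assms(2) by auto
    then show ?thesis using successively_nth[OF assms(1), of "i - 1"] i by auto
  qed
qed

lemma ugraph_edge: "ugraph V E \<Longrightarrow> e \<in> E \<Longrightarrow> x \<in> e \<Longrightarrow> x \<in> V"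
  unfolding ugraph_def by fastforce

lemma ugraph_edgeE: assumes "ugraph V E" "e \<in> E" obtains u v where "u \<in> V" "v \<in> V" "u \<noteq> v" "e = {u, v}"
  using assms unfolding ugraph_def by meson

lemma ugraph_edge_at: assumes "ugraph V E" "e \<in> E" "l \<in> e" obtains w where "w \<in> V" "w \<noteq> l" "e = {l, w}"
proof -
  obtain u v where "u \<in> V" "v \<in> V" "u \<noteq> v" "e = {u, v}" using ugraph_edgeE[OF assms(1,2)] .
  then show ?thesis using that assms(3) by (auto simp: insert_commute)
qed

lemma upath_setV:
  assumes "ugraph V E" "upath E xs" "length xs \<ge> 2" shows "set xs \<subseteq> V"
proof
  fix x assume "x \<in> set xs"
  then obtain e where "e \<in> E" "x \<in> e" using succ_in_edge[of E xs x] assms unfolding upath_succ by blast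
  then show "x \<in> V" using ugraph_edge[OF assms(1)] by blast
qed

lemma upath_single[simp]: "upath E [x]"
  unfolding upath_def by auto

lemma upath_rev: "upath E xs \<Longrightarrow> upath E (rev xs)"
  unfolding upath_succ by (auto simp: insert_commute)

lemma upath_snoc: "upath E xs \<Longrightarrow> w \<notin> set xs \<Longrightarrow> {last xs, w} \<in> E \<Longrightarrow> upath E (xs @ [w])"
  unfolding upath_succ by (auto simp: successively_append_iff)

lemma upath_drop: assumes "upath E xs" "j < length xs" shows "upath E (drop j xs)"
proof -
  have "successively (\<lambda>a b. {a,b} \<in> E) (take j xs @ drop j xs)" using assms unfolding upath_succ by simp
  then show ?thesis using assms unfolding upath_succ successively_append_iff by auto
qed

lemma extend_path:
  assumes ag: "agraph V E" and deg: "\<forall>v\<in>V - Y. degree E v \<ge> 2"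
  shows "upath E xs \<Longrightarrow> length xs \<ge> 2 \<Longrightarrow> \<exists>zs. upath E (xs @ zs) \<and> last (xs @ zs) \<in> Y"
proof (induction "card V - length xs" arbitrary: xs rule: less_induct)
  case less
  have ug: "ugraph V E" and nc: "\<not> (\<exists>xs. ucycle E xs)" using ag unfolding agraph_def by auto
  have fin: "finite V" "finite E" using ug ugraph_finiteE unfolding ugraph_def by auto
  have sV: "set xs \<subseteq> V" using upath_setV[OF ug less.prems] .
  have dist: "distinct xs" using less.prems unfolding upath_def by auto
  have lenV: "length xs \<le> card V" using distinct_card[OF dist] card_mono[OF fin(1) sV] by simp
  show ?case
  proof (cases "last xs \<in> Y")
    case True then show ?thesis by (intro exI[of _ "[]"]) (use less.prems in auto)
  next
    case False
    define n where "n = length xs"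
    define l where "l = last xs"
    define p where "p = xs ! (n - 2)"
    have ln: "l = xs ! (n - 1)" unfolding l_def n_def using less.prems(2) last_conv_nth[of xs] by fastforce
    have lV: "l \<in> V" using sV less.prems(2) unfolding l_def by (cases xs) auto
    have i1: "Suc (n-2) < length xs" "Suc (n-2) = n-1" using less.prems(2) unfolding n_def by auto
    have pl: "{p, l} \<in> E" using less.prems(1) i1 unfolding upath_def p_def ln by metis
    have d2: "degree E l \<ge> 2" using deg lV False l_def by auto
    have "\<exists>e'\<in>E. l \<in> e' \<and> e' \<noteq> {p, l}"
    proof (rule ccontr)
      assume "\<not> ?thesis"
      then have "{e \<in> E. l \<in> e} \<subseteq> {{p, l}}" by auto
      then have "card {e \<in> E. l \<in> e} \<le> card {{p, l}}" by (intro card_mono) auto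
      then have "degree E l \<le> 1" unfolding degree_def by simp
      then show False using d2 by simp
    qed
    then obtain e' where e': "e' \<in> E" "l \<in> e'" "e' \<noteq> {p, l}" by auto
    obtain w where w: "e' = {l, w}" "w \<noteq> l" using ugraph_edge_at[OF ug e'(1,2)] by metis
    have wp: "w \<noteq> p" using w e' by auto
    show ?thesis
    proof (cases "w \<in> set xs")
      case False
      have up: "upath E (xs @ [w])" using upath_snoc[OF less.prems(1) False] e' w l_def by auto
      have sV2: "set (xs @ [w]) \<subseteq> V" using upath_setV[OF ug up] less.prems(2) by simp
      have "distinct (xs @ [w])" using up unfolding upath_def by auto
      then have "length (xs @ [w]) \<le> card V" using distinct_card card_mono[OF fin(1) sV2] by metis
      then have "card V - length (xs @ [w]) < card V - length xs" by simp
      then obtain zs where "upath E ((xs @ [w]) @ zs)" "last ((xs @ [w]) @ zs) \<in> Y"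
        using less.hyps[of "xs @ [w]"] up less.prems by fastforce
      then show ?thesis by (intro exI[of _ "w # zs"]) auto
    next
      case True
      then obtain j where j: "j < n" "xs ! j = w" unfolding n_def by (auto simp: in_set_conv_nth)
      have "j \<noteq> n - 1" using j w ln by auto
      moreover have "j \<noteq> n - 2" using j wp p_def by auto
      ultimately have jn: "j + 3 \<le> n" using j by linarith
      have "ucycle E (drop j xs)"
        unfolding ucycle_def
      proof (intro conjI)
        show "upath E (drop j xs)" using upath_drop less.prems j n_def by auto
        show "3 \<le> length (drop j xs)" using jn n_def by simp
        have "last (drop j xs) = l" using j n_def l_def by simp
        moreover have "hd (drop j xs) = w" using j n_def by (simp add: hd_drop_conv_nth)
        ultimately show "{last (drop j xs), hd (drop j xs)} \<in> E" using e' w by simp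
      qed
      then show ?thesis using nc by blast
    qed
  qed
qed

lemma edges_in_span:
  assumes ag: "agraph V E" and deg: "\<forall>v\<in>V - Y. degree E v \<ge> 2"
  shows "E \<subseteq> span_edges E Y"
proof
  fix e assume e: "e \<in> E"
  have ug: "ugraph V E" using ag unfolding agraph_def by auto
  obtain u v where uv: "e = {u, v}" "u \<noteq> v" using ugraph_edgeE[OF ug e] by metis
  have p1: "upath E [u, v]" using uv e unfolding upath_def by (auto simp: nth_Cons split: nat.splits)
  obtain zs where zs: "upath E ([u,v] @ zs)" "last ([u,v] @ zs) \<in> Y"
    using extend_path[OF ag deg p1] by auto
  have p2: "upath E (rev zs @ [v, u])" using upath_rev[OF zs(1)] by simp
  obtain zs2 where zs2: "upath E ((rev zs @ [v, u]) @ zs2)" "last ((rev zs @ [v, u]) @ zs2) \<in> Y"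
    using extend_path[OF ag deg p2] by auto
  define P where "P = rev zs @ [v, u] @ zs2"
  have h1: "hd P = last ([u,v] @ zs)" unfolding P_def
    by (cases zs rule: rev_cases) (auto simp: hd_rev)
  have h2: "P ! length zs = v" "P ! Suc (length zs) = u" unfolding P_def by (auto simp: nth_append)
  have h3: "upath E P" using zs2(1) unfolding P_def by simp
  have h4: "last P \<in> Y" using zs2(2) unfolding P_def by simp
  have h5: "Suc (length zs) < length P" unfolding P_def by simp
  have h6: "e = {P ! length zs, P ! Suc (length zs)}" unfolding h2 uv(1) by blast
  have "upath E P \<and> hd P \<in> Y \<and> last P \<in> Y \<and> Suc (length zs) < length P \<and> e = {P ! length zs, P ! Suc (length zs)}"
    using zs(2) h1 h3 h4 h5 h6 by metis
  then show "e \<in> span_edges E Y" unfolding span_edges_def by blast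
qed



lemma span_edges_sub: "span_edges E Y \<subseteq> E"
  unfolding span_edges_def upath_def by blast

lemma Y_sub_span: "Y \<subseteq> span_verts E Y"
proof
  fix y assume "y \<in> Y" then show "y \<in> span_verts E Y" unfolding span_verts_def
    by (intro CollectI exI[of _ "[y]"]) simp
qed

lemma span_verts_sub: assumes "ugraph V E" "Y \<subseteq> V" shows "span_verts E Y \<subseteq> V"
proof
  fix w assume "w \<in> span_verts E Y"
  then obtain xs where xs: "upath E xs" "hd xs \<in> Y" "last xs \<in> Y" "w \<in> set xs" unfolding span_verts_def by blast
  show "w \<in> V"
  proof (cases "length xs \<ge> 2")
    case True show ?thesis using subsetD[OF upath_setV[OF assms(1) xs(1) True] xs(4)] .
  next
    case False
    have "xs \<noteq> []" using xs(1) unfolding upath_def by auto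
    then have "w = hd xs" using False xs(4) by (cases xs) (auto simp: Suc_le_eq)
    then show ?thesis using xs(2) assms(2) by auto
  qed
qed

lemma span_edge_verts: assumes "e \<in> span_edges E Y" "x \<in> e" shows "x \<in> span_verts E Y"
proof -
  obtain xs i where xs: "upath E xs" "hd xs \<in> Y" "last xs \<in> Y" "Suc i < length xs" "e = {xs ! i, xs ! Suc i}"
    using assms(1) unfolding span_edges_def by blast
  have "x \<in> set xs" using xs(4,5) assms(2) by auto
  then show ?thesis unfolding span_verts_def using xs by blast
qed

lemma span_edges_mono: "E' \<subseteq> E \<Longrightarrow> span_edges E' Y \<subseteq> span_edges E Y"
  unfolding span_edges_def using upath_mono by blast

lemma span_verts_mono: "E' \<subseteq> E \<Longrightarrow> span_verts E' Y \<subseteq> span_verts E Y"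
  unfolding span_verts_def using upath_mono by blast

lemma ugraph_span: assumes "ugraph V E" "Y \<subseteq> V" shows "ugraph (span_verts E Y) (span_edges E Y)"
  unfolding ugraph_def
proof (intro conjI ballI)
  show "finite (span_verts E Y)" using span_verts_sub[OF assms] assms(1) finite_subset unfolding ugraph_def by blast
  fix e assume e: "e \<in> span_edges E Y"
  then obtain xs i where xs: "upath E xs" "hd xs \<in> Y" "last xs \<in> Y" "Suc i < length xs" "e = {xs ! i, xs ! Suc i}"
    unfolding span_edges_def by blast
  have "xs ! i \<noteq> xs ! Suc i" using xs(1,4) unfolding upath_def by (simp add: nth_eq_iff_index_eq)
  moreover have "xs ! i \<in> span_verts E Y" "xs ! Suc i \<in> span_verts E Y" using span_edge_verts[OF e] xs(5) by auto
  ultimately show "\<exists>u v. u \<in> span_verts E Y \<and> v \<in> span_verts E Y \<and> u \<noteq> v \<and> e = {u, v}" using xs(5) by blast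
qed

lemma agraph_span: assumes "agraph V E" "Y \<subseteq> V" shows "agraph (span_verts E Y) (span_edges E Y)"
  using assms ugraph_span span_edges_sub ucycle_mono unfolding agraph_def by metis

lemma leaves_span:
  assumes "finite E" "\<forall>y\<in>Y. degree E y \<le> 1"
  shows "leaves (span_verts E Y) (span_edges E Y) = Y"
proof (intro equalityI subsetI)
  fix y assume y: "y \<in> Y"
  have "degree (span_edges E Y) y \<le> degree E y" unfolding degree_def
    using assms(1) span_edges_sub by (intro card_mono) auto
  then show "y \<in> leaves (span_verts E Y) (span_edges E Y)" unfolding leaves_def
    using y assms(2) Y_sub_span by fastforce
next
  fix w assume w: "w \<in> leaves (span_verts E Y) (span_edges E Y)"
  show "w \<in> Y"
  proof (rule ccontr)
    assume nY: "w \<notin> Y"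
    obtain xs where xs: "upath E xs" "hd xs \<in> Y" "last xs \<in> Y" "w \<in> set xs" using w unfolding leaves_def span_verts_def by blast
    obtain i where i: "i < length xs" "xs ! i = w" using xs(4) by (auto simp: in_set_conv_nth)
    have ne: "xs \<noteq> []" using xs(1) unfolding upath_def by auto
    have "i \<noteq> 0" using i xs(2) nY ne by (metis hd_conv_nth)
    moreover have "i \<noteq> length xs - 1" using i xs(3) nY ne by (metis last_conv_nth)
    ultimately have ii: "Suc (i - 1) = i" "Suc i < length xs" using i by auto
    define a where "a = xs ! (i - 1)"
    define b where "b = xs ! Suc i"
    have e1: "{a, w} \<in> span_edges E Y" unfolding span_edges_def a_def
      using xs ii i by (intro CollectI exI[of _ xs] exI[of _ "i - 1"]) auto
    have e2: "{w, b} \<in> span_edges E Y" unfolding span_edges_def b_def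
      using xs ii i by (intro CollectI exI[of _ xs] exI[of _ i]) auto
    have "a \<noteq> b" unfolding a_def b_def using xs(1) ii unfolding upath_def by (simp add: nth_eq_iff_index_eq)
    then have "{a, w} \<noteq> {w, b}" by (auto simp: doubleton_eq_iff)
    then have "card {{a, w}, {w, b}} = 2" by simp
    moreover have "card {{a, w}, {w, b}} \<le> degree (span_edges E Y) w" unfolding degree_def
      using e1 e2 span_edges_sub assms(1) by (intro card_mono) (auto intro: finite_subset)
    ultimately show False using w unfolding leaves_def by simp
  qed
qed

lemma changes_cong: "(\<And>e x. e \<in> E \<Longrightarrow> x \<in> e \<Longrightarrow> g x = h x) \<Longrightarrow> changes E g = changes E h"
proof -
  assume a: "\<And>e x. e \<in> E \<Longrightarrow> x \<in> e \<Longrightarrow> g x = h x"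
  have "\<And>e. e \<in> E \<Longrightarrow> (\<exists>u v. e = {u, v} \<and> g u \<noteq> g v) = (\<exists>u v. e = {u, v} \<and> h u \<noteq> h v)"
  proof -
    fix e assume e: "e \<in> E"
    show "(\<exists>u v. e = {u, v} \<and> g u \<noteq> g v) = (\<exists>u v. e = {u, v} \<and> h u \<noteq> h v)"
    proof
      assume "\<exists>u v. e = {u, v} \<and> g u \<noteq> g v"
      then obtain u v where "e = {u, v}" "g u \<noteq> g v" by blast
      moreover have "g u = h u" "g v = h v" using a[OF e] calculation(1) by auto
      ultimately show "\<exists>u v. e = {u, v} \<and> h u \<noteq> h v" by metis
    next
      assume "\<exists>u v. e = {u, v} \<and> h u \<noteq> h v"
      then obtain u v where "e = {u, v}" "h u \<noteq> h v" by blast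
      moreover have "g u = h u" "g v = h v" using a[OF e] calculation(1) by auto
      ultimately show "\<exists>u v. e = {u, v} \<and> g u \<noteq> g v" by metis
    qed
  qed
  then show ?thesis unfolding changes_def by (metis (mono_tags, lifting) Collect_cong)
qed

lemma Q_graph_mono:
  assumes "W \<subseteq> W'" "F \<subseteq> F'" "finite F'" "f ` C \<subseteq> S" "S \<noteq> {}"
  shows "Q S f W F C \<le> Q S f W' F' C"
  unfolding Q_adm
proof (rule INF_mono_nat)
  fix b assume "b \<in> adm S f W' C"
  then have "b \<in> adm S f W C" using assms(1) unfolding adm_def by auto
  moreover have "changes F b \<le> changes F' b" using changes_mono[OF assms(3,2)] .
  ultimately show "\<exists>a\<in>adm S f W C. changes F a \<le> changes F' b" by blast
next
  show "adm S f W' C \<noteq> {}" using adm_ne[OF assms(4,5)] by blast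
qed



lemma ch_const: "e = {v, w} \<Longrightarrow> a v = a w \<Longrightarrow> \<not> (\<exists>u u'. e = {u, u'} \<and> a u \<noteq> a u')"
  by (auto simp: doubleton_eq_iff)

lemma Q_remove:
  assumes ug: "ugraph V E" and v: "v \<in> V" "v \<notin> C" "degree E v \<le> 1" and S: "S \<noteq> {}"
  shows "Q S f V E C \<le> Q S f (V - {v}) {e \<in> E. v \<notin> e} C"
  unfolding Q_adm
proof (rule INF_mono_nat)
  have finE: "finite E" using ugraph_finiteE[OF ug] .
  fix b assume b: "b \<in> adm S f (V - {v}) C"
  obtain c where c: "c \<in> S" "\<And>e x. e \<in> E \<Longrightarrow> v \<in> e \<Longrightarrow> x \<in> e \<Longrightarrow> x \<noteq> v \<Longrightarrow> b x = c"
  proof (cases "\<exists>e0\<in>E. v \<in> e0")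
    case True
    then obtain e0 where e0: "e0 \<in> E" "v \<in> e0" by auto
    obtain w where w: "w \<in> V" "w \<noteq> v" "e0 = {v, w}" using ugraph_edge_at[OF ug e0] by metis
    have uniq: "\<And>e. e \<in> E \<Longrightarrow> v \<in> e \<Longrightarrow> e = e0"
    proof -
      fix e assume "e \<in> E" "v \<in> e"
      have "finite {e \<in> E. v \<in> e}" using finE by auto
      then have "\<forall>a1\<in>{e \<in> E. v \<in> e}. \<forall>a2\<in>{e \<in> E. v \<in> e}. a1 = a2"
        using card_le_Suc0_iff_eq v(3) unfolding degree_def by (metis One_nat_def)
      then show "e = e0" using \<open>e \<in> E\<close> \<open>v \<in> e\<close> e0 by blast
    qed
    have "b w \<in> S" using b w unfolding adm_def by auto
    moreover have "\<And>e x. e \<in> E \<Longrightarrow> v \<in> e \<Longrightarrow> x \<in> e \<Longrightarrow> x \<noteq> v \<Longrightarrow> b x = b w"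
      using uniq w by fastforce
    ultimately show ?thesis using that by blast
  next
    case False
    have "(SOME s. s \<in> S) \<in> S" using S by (simp add: some_in_eq)
    then show ?thesis using that False by blast
  qed
  define a where "a = b(v := c)"
  have "a \<in> adm S f V C" using b c v(2) unfolding adm_def a_def by auto
  moreover have "changes E a \<le> changes {e \<in> E. v \<notin> e} b"
    unfolding changes_def
  proof (rule card_mono)
    show "finite {e \<in> {e \<in> E. v \<notin> e}. \<exists>u va. e = {u, va} \<and> b u \<noteq> b va}" using finE by auto
    show "{e \<in> E. \<exists>u va. e = {u, va} \<and> a u \<noteq> a va} \<subseteq> {e \<in> {e \<in> E. v \<notin> e}. \<exists>u va. e = {u, va} \<and> b u \<noteq> b va}"
    proof
      fix e assume e: "e \<in> {e \<in> E. \<exists>u va. e = {u, va} \<and> a u \<noteq> a va}"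
      show "e \<in> {e \<in> {e \<in> E. v \<notin> e}. \<exists>u va. e = {u, va} \<and> b u \<noteq> b va}"
      proof (cases "v \<in> e")
        case True
        obtain w where w: "w \<noteq> v" "e = {v, w}" using ugraph_edge_at[OF ug _ True] e by blast
        have "a w = c" using c(2)[of e w] e True w unfolding a_def by auto
        moreover have "a v = c" unfolding a_def by simp
        ultimately show ?thesis using ch_const[OF w(2), of a] e by auto
      next
        case False
        then have "\<And>x. x \<in> e \<Longrightarrow> a x = b x" unfolding a_def by auto
        then show ?thesis using e False by fastforce
      qed
    qed
  qed
  ultimately show "\<exists>a\<in>adm S f V C. changes E a \<le> changes {e \<in> E. v \<notin> e} b" by blast
next
  fix a assume "a \<in> adm S f V C"
  then have "a \<in> adm S f (V - {v}) C" unfolding adm_def by auto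
  then show "adm S f (V - {v}) C \<noteq> {}" by blast
qed

lemma Q_le_span:
  "agraph V E \<Longrightarrow> Y \<subseteq> V \<Longrightarrow> S \<noteq> {} \<Longrightarrow> f ` Y \<subseteq> S \<Longrightarrow>
   Q S f V E Y \<le> Q S f (span_verts E Y) (span_edges E Y) Y"
proof (induction "card V" arbitrary: V E rule: less_induct)
  case less
  have ug: "ugraph V E" and nc: "\<not> (\<exists>xs. ucycle E xs)" using less.prems unfolding agraph_def by auto
  have finV: "finite V" using ug unfolding ugraph_def by auto
  have finE: "finite E" using ugraph_finiteE[OF ug] .
  show ?case
  proof (cases "\<exists>v\<in>V - Y. degree E v \<le> 1")
    case True
    then obtain v where v: "v \<in> V" "v \<notin> Y" "degree E v \<le> 1" by auto
    define V' where "V' = V - {v}"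
    define E' where "E' = {e \<in> E. v \<notin> e}"
    have ug': "ugraph V' E'" unfolding ugraph_def
    proof (intro conjI ballI)
      show "finite V'" using finV V'_def by auto
      fix e assume "e \<in> E'"
      then have e: "e \<in> E" "v \<notin> e" unfolding E'_def by auto
      obtain u w where "u \<in> V" "w \<in> V" "u \<noteq> w" "e = {u, w}" using ugraph_edgeE[OF ug e(1)] by metis
      then show "\<exists>u w. u \<in> V' \<and> w \<in> V' \<and> u \<noteq> w \<and> e = {u, w}" using e(2) unfolding V'_def by blast
    qed
    have ag': "agraph V' E'" unfolding agraph_def using ug' nc ucycle_mono[of E' _ E] E'_def by blast
    have "card V' < card V" using card_Diff1_less[OF finV v(1)] unfolding V'_def .
    then have IH: "Q S f V' E' Y \<le> Q S f (span_verts E' Y) (span_edges E' Y) Y"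
      using less.hyps[OF _ ag'] less.prems v unfolding V'_def by blast
    have "E' \<subseteq> E" unfolding E'_def by auto
    then have "Q S f (span_verts E' Y) (span_edges E' Y) Y \<le> Q S f (span_verts E Y) (span_edges E Y) Y"
      using span_verts_mono[OF \<open>E' \<subseteq> E\<close>] span_edges_mono[OF \<open>E' \<subseteq> E\<close>]
        finite_subset[OF span_edges_sub finE] less.prems(3,4)
      by (intro Q_graph_mono)
    moreover have "Q S f V E Y \<le> Q S f V' E' Y"
      unfolding V'_def E'_def using Q_remove[OF ug v less.prems(3)] .
    ultimately show ?thesis using IH by linarith
  next
    case False
    then have deg: "\<forall>v\<in>V - Y. degree E v \<ge> 2" by (metis Suc_1 not_less_eq_eq)
    have Eeq: "span_edges E Y = E" using edges_in_span[OF less.prems(1) deg] span_edges_sub by blast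
    have sV: "span_verts E Y \<subseteq> V" using span_verts_sub[OF ug less.prems(2)] .
    obtain c0 where c0: "c0 \<in> S" using less.prems(3) by auto
    show ?thesis unfolding Q_adm
    proof (rule INF_mono_nat)
      fix b assume b: "b \<in> adm S f (span_verts E Y) Y"
      define a where "a = (\<lambda>x. if x \<in> span_verts E Y then b x else c0)"
      have "a \<in> adm S f V Y" using b c0 Y_sub_span[of Y E] unfolding adm_def a_def by auto
      moreover have "changes E a = changes (span_edges E Y) b"
        unfolding Eeq using span_edge_verts[of _ E Y] Eeq unfolding a_def by (intro changes_cong) auto
      ultimately show "\<exists>a\<in>adm S f V Y. changes E a \<le> changes (span_edges E Y) b" by (intro bexI[of _ a]) auto
    next
      fix a assume "a \<in> adm S f V Y"
      then have "a \<in> adm S f (span_verts E Y) Y" using sV unfolding adm_def by auto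
      then show "adm S f (span_verts E Y) Y \<noteq> {}" by blast
    qed
  qed
qed

lemma Q_span_eq:
  assumes "tree_on X V E" "Y \<subseteq> X" "S \<noteq> {}" "f ` Y \<subseteq> S"
  shows "Q S f V E Y = pscore S f (span_verts E Y) (span_edges E Y)"
proof -
  have ag: "agraph V E" using assms(1) unfolding tree_on_def utree_def agraph_def by auto
  have ug: "ugraph V E" using ag unfolding agraph_def by auto
  have finE: "finite E" using ugraph_finiteE[OF ug] .
  have XV: "X \<subseteq> V" and degX: "\<forall>y\<in>X. degree E y \<le> 1" using assms(1) unfolding tree_on_def leaves_def by auto
  have YV: "Y \<subseteq> V" using XV assms(2) by auto
  have lv: "leaves (span_verts E Y) (span_edges E Y) = Y" using leaves_span[OF finE] degX assms(2) by auto
  have "Q S f (span_verts E Y) (span_edges E Y) Y \<le> Q S f V E Y"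
    using span_verts_sub[OF ug YV] span_edges_sub finE assms(3,4) by (intro Q_graph_mono) auto
  moreover have "Q S f V E Y \<le> Q S f (span_verts E Y) (span_edges E Y) Y"
    using Q_le_span[OF ag YV assms(3,4)] .
  ultimately show ?thesis unfolding pscore_Q lv by simp
qed



lemma succ_split:
  "\<not> successively P xs \<Longrightarrow> \<exists>as bs. xs = as @ bs \<and> as \<noteq> [] \<and> bs \<noteq> [] \<and> \<not> P (last as) (hd bs)"
proof (induction xs rule: induct_list012)
  case (3 a b zs)
  show ?case
  proof (cases "P a b")
    case False then show ?thesis by (intro exI[of _ "[a]"] exI[of _ "b # zs"]) auto
  next
    case True
    then have "\<not> successively P (b # zs)" using "3.prems" by simp
    then obtain as bs where "b # zs = as @ bs" "as \<noteq> []" "bs \<noteq> []" "\<not> P (last as) (hd bs)"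
      using "3.IH"(2) by metis
    then show ?thesis by (intro exI[of _ "a # as"] exI[of _ bs]) auto
  qed
qed auto

lemma internal_set: "distinct xs \<Longrightarrow> set (butlast (tl xs)) = set xs - {hd xs, last xs}"
proof (cases xs)
  case (Cons a ys)
  assume d: "distinct xs"
  show ?thesis
  proof (cases "ys = []")
    case True then show ?thesis using Cons by simp
  next
    case False
    have "set ys = insert (last ys) (set (butlast ys))" using False
      by (metis append_butlast_last_id list.simps(15) rotate1.simps(2) set_rotate1)
    moreover have "last ys \<notin> set (butlast ys)" using d Cons False
      by (metis append_butlast_last_id distinct.simps(2) distinct_append not_distinct_conv_prefix)
    moreover have "a \<notin> set ys" using d Cons by simp
    ultimately show ?thesis using Cons False by auto
  qed
qed simp

lemma hd_last_len1: "distinct xs \<Longrightarrow> xs \<noteq> [] \<Longrightarrow> hd xs = last xs \<Longrightarrow> length xs = 1"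
proof -
  assume a: "distinct xs" "xs \<noteq> []" "hd xs = last xs"
  then have "xs ! 0 = xs ! (length xs - 1)" by (simp add: hd_conv_nth last_conv_nth)
  then have "0 = length xs - 1" using a(1,2) nth_eq_iff_index_eq by fastforce
  then show ?thesis using a(2) by (cases xs) auto
qed

lemma upath_len2: "upath E xs \<Longrightarrow> hd xs \<noteq> last xs \<Longrightarrow> length xs \<ge> 2"
  unfolding upath_def by (cases xs) (auto simp: Suc_le_eq)

lemma changes_Un: "finite R \<Longrightarrow> finite P \<Longrightarrow> R \<inter> P = {} \<Longrightarrow> changes (R \<union> P) g = changes R g + changes P g"
  unfolding changes_def by (subst card_Un_disjoint[symmetric]) (auto intro: arg_cong[where f=card])

lemma changes_single: "changes {{p, q}} g = (if g p \<noteq> g q then 1 else 0)"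
proof -
  have "{e \<in> {{p, q}}. \<exists>u v. e = {u, v} \<and> g u \<noteq> g v} = (if g p \<noteq> g q then {{p,q}} else {})"
    using changes_pair[of p q g] by auto
  then show ?thesis unfolding changes_def by simp
qed

lemma changes_two_ge: assumes "p \<noteq> q" shows "changes {{p, q}} g \<le> changes {{w, p}, {w, q}} g"
proof (cases "g p \<noteq> g q")
  case True
  let ?A = "{e \<in> {{w, p}, {w, q}}. \<exists>u v. e = {u, v} \<and> g u \<noteq> g v}"
  have "?A \<noteq> {}"
  proof (cases "g w \<noteq> g p")
    case True
    then have "{w, p} \<in> ?A" by blast
    then show ?thesis by (rule ex_in_conv[THEN iffD1, OF exI])
  next
    case False
    then have "g w \<noteq> g q" using \<open>g p \<noteq> g q\<close> by simp
    then have "{w, q} \<in> ?A" by blast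
    then show ?thesis by (rule ex_in_conv[THEN iffD1, OF exI])
  qed
  moreover have "finite ?A" by simp
  ultimately have "card ?A \<ge> 1" using card_gt_0_iff[of ?A] by linarith
  then show ?thesis unfolding changes_single changes_def[of "{{w,p},{w,q}}"] using True by simp
qed (simp add: changes_single)

lemma changes_two_le: assumes "g w = g p" shows "changes {{w, p}, {w, q}} g \<le> changes {{p, q}} g"
proof -
  have "{e \<in> {{w, p}, {w, q}}. \<exists>u v. e = {u, v} \<and> g u \<noteq> g v} \<subseteq> {e \<in> {{w, q}}. \<exists>u v. e = {u, v} \<and> g u \<noteq> g v}"
  proof
    fix e assume e: "e \<in> {e \<in> {{w, p}, {w, q}}. \<exists>u v. e = {u, v} \<and> g u \<noteq> g v}"
    then have e1: "e = {w, p} \<or> e = {w, q}" and e2: "\<exists>u v. e = {u, v} \<and> g u \<noteq> g v" by blast+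
    have "e \<noteq> {w, p}"
    proof
      assume "e = {w, p}"
      then have "g w \<noteq> g p" using e2 changes_pair[of w p g] by metis
      then show False using assms by simp
    qed
    then show "e \<in> {e \<in> {{w, q}}. \<exists>u v. e = {u, v} \<and> g u \<noteq> g v}" using e1 e2 by blast
  qed
  then have "changes {{w, p}, {w, q}} g \<le> changes {{w, q}} g"
    unfolding changes_def by (intro card_mono) simp_all
  then show ?thesis unfolding changes_single using assms by simp
qed



locale supstep =
  fixes V :: "'v set" and E :: "'v set set" and w p q :: 'v
  assumes ag: "agraph V E" and wV: "w \<in> V" and ep: "{w, p} \<in> E" and eq: "{w, q} \<in> E"
    and pq: "p \<noteq> q" and dw: "degree E w = 2"
begin

definition "V' = V - {w}"
definition "E' = insert {p, q} {e \<in> E. w \<notin> e}"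

lemma ug: "ugraph V E" using ag unfolding agraph_def by simp
lemma nc: "\<not> ucycle E xs" using ag unfolding agraph_def by simp
lemma finE: "finite E" using ugraph_finiteE[OF ug] .
lemma finV: "finite V" using ug unfolding ugraph_def by simp

lemma wp: "w \<noteq> p"
proof
  assume "w = p"
  obtain u v where "u \<noteq> v" "{w, p} = {u, v}" using ugraph_edgeE[OF ug ep] by metis
  then show False using \<open>w = p\<close> by (simp add: doubleton_eq_iff)
qed

lemma wq: "w \<noteq> q"
proof
  assume "w = q"
  obtain u v where "u \<noteq> v" "{w, q} = {u, v}" using ugraph_edgeE[OF ug eq] by metis
  then show False using \<open>w = q\<close> by (simp add: doubleton_eq_iff)
qed

lemma pV: "p \<in> V" using ugraph_edge[OF ug ep] by simp
lemma qV: "q \<in> V" using ugraph_edge[OF ug eq] by simp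

lemma two_ne: "{w, p} \<noteq> {w, q}" using pq wp wq by (simp add: doubleton_eq_iff)

lemma Ew: "{e \<in> E. w \<in> e} = {{w, p}, {w, q}}"
proof -
  have sub: "{{w, p}, {w, q}} \<subseteq> {e \<in> E. w \<in> e}" using ep eq by simp
  have "card {{w, p}, {w, q}} = 2" using two_ne by simp
  then have "card {{w, p}, {w, q}} = card {e \<in> E. w \<in> e}" using dw unfolding degree_def by simp
  then show ?thesis using card_subset_eq[OF _ sub] finE by simp
qed

lemma Ew': "e \<in> E \<Longrightarrow> w \<in> e \<Longrightarrow> e = {w, p} \<or> e = {w, q}"
  using Ew by blast

lemma pqE: "{p, q} \<notin> E"
proof
  assume a: "{p, q} \<in> E"
  have "ucycle E [p, w, q]" unfolding ucycle_def upath_def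
    using a ep eq pq wp wq by (auto simp: nth_Cons insert_commute split: nat.splits)
  then show False using nc by simp
qed

lemma E_split: "E = {e \<in> E. w \<notin> e} \<union> {{w, p}, {w, q}}"
  using Ew by blast

lemma E'_split: "E' = {e \<in> E. w \<notin> e} \<union> {{p, q}}"
  unfolding E'_def by blast

lemma disj1: "{e \<in> E. w \<notin> e} \<inter> {{w, p}, {w, q}} = {}" by auto
lemma disj2: "{e \<in> E. w \<notin> e} \<inter> {{p, q}} = {}" using pqE by auto

lemma finE': "finite E'" unfolding E'_def using finE by simp

lemma deg_eq: assumes "v \<noteq> w" shows "degree E' v = degree E v"
proof -
  let ?R = "{e \<in> E. w \<notin> e \<and> v \<in> e}"
  have s1: "{e \<in> E. v \<in> e} = ?R \<union> {e \<in> {{w, p}, {w, q}}. v \<in> e}"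
    using E_split by blast
  have s2: "{e \<in> E'. v \<in> e} = ?R \<union> {e \<in> {{p, q}}. v \<in> e}"
    using E'_split by blast
  have fR: "finite ?R" using finE by simp
  have c: "card {e \<in> {{w, p}, {w, q}}. v \<in> e} = card {e \<in> {{p, q}}. v \<in> e}"
  proof (cases "v = p")
    case True
    then have "{e \<in> {{w, p}, {w, q}}. v \<in> e} = {{w, p}}" using pq wp by auto
    moreover have "{e \<in> {{p, q}}. v \<in> e} = {{p, q}}" using True by auto
    ultimately show ?thesis by simp
  next
    case False
    show ?thesis
    proof (cases "v = q")
      case True
      then have "{e \<in> {{w, p}, {w, q}}. v \<in> e} = {{w, q}}" using pq wq by auto
      moreover have "{e \<in> {{p, q}}. v \<in> e} = {{p, q}}" using True by auto
      ultimately show ?thesis by simp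
    next
      case F2: False
      then have z: "{e \<in> {{w, p}, {w, q}}. v \<in> e} = {}" "{e \<in> {{p, q}}. v \<in> e} = {}" using False assms by auto
      show ?thesis unfolding z ..
    qed
  qed
  have "degree E' v = card ?R + card {e \<in> {{p, q}}. v \<in> e}"
    unfolding degree_def s2 using fR disj2 by (intro card_Un_disjoint) auto
  also have "\<dots> = card ?R + card {e \<in> {{w, p}, {w, q}}. v \<in> e}" using c by simp
  also have "\<dots> = degree E v"
    unfolding degree_def s1 using fR disj1 by (intro card_Un_disjoint[symmetric]) auto
  finally show ?thesis .
qed


lemma succ_to_E': "successively (\<lambda>a b. {a, b} \<in> E) zs \<Longrightarrow> w \<notin> set zs \<Longrightarrow> successively (\<lambda>a b. {a, b} \<in> E') zs"
  by (erule successively_mono) (auto simp: E'_def)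

lemma succ_to_E: "successively (\<lambda>a b. {a, b} \<in> E') zs \<Longrightarrow> p \<notin> set zs \<or> q \<notin> set zs \<Longrightarrow> successively (\<lambda>a b. {a, b} \<in> E) zs"
proof (erule successively_mono)
  fix x y assume a: "p \<notin> set zs \<or> q \<notin> set zs" "x \<in> set zs" "y \<in> set zs" "{x, y} \<in> E'"
  have "{x, y} \<noteq> {p, q}" using a(1-3) by (auto simp: doubleton_eq_iff)
  then show "{x, y} \<in> E" using a(4) unfolding E'_def by blast
qed

lemma w_notin: assumes "upath E' ys" "length ys \<ge> 2" shows "w \<notin> set ys"
proof
  assume "w \<in> set ys"
  then obtain e where e: "e \<in> E'" "w \<in> e" using succ_in_edge[of E' ys w] assms unfolding upath_succ by blast
  then show False using wp wq unfolding E'_def by auto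
qed

lemma remove_w:
  assumes "upath E xs" "w \<in> set xs" "hd xs \<noteq> w" "last xs \<noteq> w"
  shows "\<exists>as bs. xs = as @ w # bs \<and> as \<noteq> [] \<and> bs \<noteq> [] \<and> upath E' (as @ bs)"
proof -
  obtain as bs where xs: "xs = as @ w # bs" using split_list[OF assms(2)] by blast
  have asn: "as \<noteq> []" using assms(3) xs by auto
  have bsn: "bs \<noteq> []" using assms(4) xs by auto
  have d: "distinct (as @ w # bs)" using assms(1) xs unfolding upath_def by simp
  have sc: "successively (\<lambda>a b. {a, b} \<in> E) (as @ [w] @ bs)" using assms(1) xs unfolding upath_succ by simp
  then have s1: "successively (\<lambda>a b. {a, b} \<in> E) as" and s2: "successively (\<lambda>a b. {a, b} \<in> E) bs"
    and e1: "{last as, w} \<in> E" and e2: "{w, hd bs} \<in> E"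
    using asn bsn unfolding successively_append_iff by (auto simp: successively_Cons)
  have l1: "last as = p \<or> last as = q" using Ew'[OF e1] wp wq by (auto simp: doubleton_eq_iff)
  have l2: "hd bs = p \<or> hd bs = q" using Ew'[OF e2] wp wq by (auto simp: doubleton_eq_iff)
  have "last as \<noteq> hd bs" using d asn bsn by (metis Un_iff disjoint_iff distinct_append empty_iff hd_in_set
      last_in_set list.set_intros(2) distinct.simps(2) set_append)
  then have lh: "{last as, hd bs} = {p, q}" using l1 l2 by (auto simp: insert_commute)
  have "successively (\<lambda>a b. {a, b} \<in> E') as" using succ_to_E'[OF s1] d by auto
  moreover have "successively (\<lambda>a b. {a, b} \<in> E') bs" using succ_to_E'[OF s2] d by auto
  moreover have "{last as, hd bs} \<in> E'" unfolding lh E'_def by simp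
  ultimately have "successively (\<lambda>a b. {a, b} \<in> E') (as @ bs)" unfolding successively_append_iff by blast
  moreover have "distinct (as @ bs)" using d by simp
  ultimately have "upath E' (as @ bs)" unfolding upath_succ using asn by simp
  then show ?thesis using xs asn bsn by blast
qed

lemma insert_w:
  assumes "upath E' (as @ bs)" "as \<noteq> []" "bs \<noteq> []" "{last as, hd bs} = {p, q}" "w \<notin> set (as @ bs)"
  shows "upath E (as @ w # bs)"
proof -
  have d: "distinct (as @ bs)" using assms(1) unfolding upath_def by simp
  have sc: "successively (\<lambda>a b. {a, b} \<in> E') (as @ bs)" using assms(1) unfolding upath_succ by simp
  then have s1: "successively (\<lambda>a b. {a, b} \<in> E') as" and s2: "successively (\<lambda>a b. {a, b} \<in> E') bs"
    unfolding successively_append_iff by auto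
  have la: "last as \<in> set as" "hd bs \<in> set bs" using assms(2,3) by auto
  have lab: "(last as = p \<and> hd bs = q) \<or> (last as = q \<and> hd bs = p)" using assms(4) by (auto simp: doubleton_eq_iff)
  have "p \<notin> set as \<or> q \<notin> set as" using lab la d by auto
  then have t1: "successively (\<lambda>a b. {a, b} \<in> E) as" using succ_to_E[OF s1] by blast
  have "p \<notin> set bs \<or> q \<notin> set bs" using lab la d by auto
  then have t2: "successively (\<lambda>a b. {a, b} \<in> E) bs" using succ_to_E[OF s2] by blast
  have e1: "{last as, w} \<in> E" using lab ep eq by (auto simp: insert_commute)
  have e2: "{w, hd bs} \<in> E" using lab ep eq by auto
  have "successively (\<lambda>a b. {a, b} \<in> E) (as @ [w] @ bs)"
    unfolding successively_append_iff using t1 t2 e1 e2 assms(3) by (auto simp: successively_Cons)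
  moreover have "distinct (as @ w # bs)" using d assms(5) by auto
  ultimately show ?thesis unfolding upath_succ by simp
qed

lemma split_E':
  assumes "upath E' ys" "\<not> successively (\<lambda>a b. {a, b} \<in> E) ys"
  shows "\<exists>as bs. ys = as @ bs \<and> as \<noteq> [] \<and> bs \<noteq> [] \<and> {last as, hd bs} = {p, q}"
proof -
  obtain as bs where ab: "ys = as @ bs" "as \<noteq> []" "bs \<noteq> []" "{last as, hd bs} \<notin> E"
    using succ_split[OF assms(2)] by blast
  have "successively (\<lambda>a b. {a, b} \<in> E') (as @ bs)" using assms(1) ab unfolding upath_succ by simp
  then have "{last as, hd bs} \<in> E'" using ab(2,3) unfolding successively_append_iff by blast
  then have "{last as, hd bs} = {p, q}" using ab(4) unfolding E'_def by blast
  then show ?thesis using ab by blast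
qed


lemma ug': "ugraph V' E'"
  unfolding ugraph_def
proof (intro conjI ballI)
  show "finite V'" unfolding V'_def using finV by simp
  fix e assume "e \<in> E'"
  then have "e = {p, q} \<or> (e \<in> E \<and> w \<notin> e)" unfolding E'_def by blast
  then show "\<exists>u v. u \<in> V' \<and> v \<in> V' \<and> u \<noteq> v \<and> e = {u, v}"
  proof
    assume "e = {p, q}"
    then show ?thesis using pV qV pq wp wq unfolding V'_def by blast
  next
    assume a: "e \<in> E \<and> w \<notin> e"
    obtain u v where "u \<in> V" "v \<in> V" "u \<noteq> v" "e = {u, v}" using ugraph_edgeE[OF ug] a by metis
    then show ?thesis using a unfolding V'_def by blast
  qed
qed

lemma nc': "\<not> ucycle E' ys"
proof
  assume cy: "ucycle E' ys"
  have up: "upath E' ys" and len: "length ys \<ge> 3" and cl: "{last ys, hd ys} \<in> E'" using cy unfolding ucycle_def by auto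
  have wn: "w \<notin> set ys" using w_notin[OF up] len by simp
  have d: "distinct ys" and ne: "ys \<noteq> []" using up unfolding upath_def by auto
  show False
  proof (cases "successively (\<lambda>a b. {a, b} \<in> E) ys")
    case True
    then have upE: "upath E ys" using d ne unfolding upath_succ by simp
    show False
    proof (cases "{last ys, hd ys} \<in> E")
      case True
      then have "ucycle E ys" using upE len unfolding ucycle_def by simp
      then show False using nc by simp
    next
      case False
      then have lh: "{last ys, hd ys} = {p, q}" using cl unfolding E'_def by blast
      then have lh2: "(last ys = p \<and> hd ys = q) \<or> (last ys = q \<and> hd ys = p)" by (auto simp: doubleton_eq_iff)
      have e1: "{last ys, w} \<in> E" using lh2 ep eq by (auto simp: insert_commute)
      have e2: "{w, hd ys} \<in> E" using lh2 ep eq by auto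
      have "upath E (ys @ [w])" using upath_snoc[OF upE wn e1] .
      moreover have "hd (ys @ [w]) = hd ys" using ne by simp
      ultimately have "ucycle E (ys @ [w])" unfolding ucycle_def using len e2 by simp
      then show False using nc by simp
    qed
  next
    case False
    obtain as bs where ab: "ys = as @ bs" "as \<noteq> []" "bs \<noteq> []" "{last as, hd bs} = {p, q}"
      using split_E'[OF up False] by blast
    have upw: "upath E (as @ w # bs)" using insert_w[OF _ ab(2,3,4)] up ab(1) wn by simp
    have da: "distinct as" "distinct bs" "set as \<inter> set bs = {}" using d ab(1) by auto
    have cl2: "{last ys, hd ys} = {last bs, hd as}" using ab by (simp add: insert_commute)
    have "{last bs, hd as} \<noteq> {p, q}"
    proof
      assume "{last bs, hd as} = {p, q}"
      then have eqs: "{last bs, hd as} = {last as, hd bs}" using ab(4) by simp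
      have "hd as \<noteq> hd bs" using da ab(2,3) by (metis disjoint_iff hd_in_set)
      then have "hd as = last as" "last bs = hd bs" using eqs by (auto simp: doubleton_eq_iff)
      then have "length as = 1" "length bs = 1" using hd_last_len1 da ab(2,3) by metis+
      then show False using len ab(1) by simp
    qed
    then have "{last (as @ w # bs), hd (as @ w # bs)} \<in> E" using cl cl2 ab(2,3) unfolding E'_def by auto
    moreover have "length (as @ w # bs) \<ge> 3" using len ab(1) by simp
    ultimately have "ucycle E (as @ w # bs)" using upw unfolding ucycle_def by simp
    then show False using nc by simp
  qed
qed

lemma ag': "agraph V' E'" unfolding agraph_def using ug' nc' by blast

lemma leaves_eq: "leaves V' E' = leaves V E"
proof -
  have "\<And>v. v \<in> V - {w} \<and> degree E' v \<le> 1 \<longleftrightarrow> v \<in> V \<and> degree E v \<le> 1"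
  proof -
    fix v show "v \<in> V - {w} \<and> degree E' v \<le> 1 \<longleftrightarrow> v \<in> V \<and> degree E v \<le> 1"
      using deg_eq[of v] dw by (cases "v = w") auto
  qed
  then show ?thesis unfolding leaves_def V'_def by blast
qed

lemma suppr_verts_eq: "suppr_verts V' E' = suppr_verts V E"
proof -
  have "\<And>v. v \<in> V - {w} \<and> degree E' v \<noteq> 2 \<longleftrightarrow> v \<in> V \<and> degree E v \<noteq> 2"
  proof -
    fix v show "v \<in> V - {w} \<and> degree E' v \<noteq> 2 \<longleftrightarrow> v \<in> V \<and> degree E v \<noteq> 2"
      using deg_eq[of v] dw by (cases "v = w") auto
  qed
  then show ?thesis unfolding suppr_verts_def V'_def by blast
qed

lemma deg2_less: "card {v \<in> V'. degree E' v = 2} < card {v \<in> V. degree E v = 2}"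
proof -
  have "{v \<in> V'. degree E' v = 2} = {v \<in> V. degree E v = 2} - {w}"
    unfolding V'_def using deg_eq by auto
  moreover have "w \<in> {v \<in> V. degree E v = 2}" using wV dw by simp
  moreover have "finite {v \<in> V. degree E v = 2}" using finV by simp
  ultimately show ?thesis using card_Diff1_less by metis
qed

lemma Q_eq: assumes "w \<notin> C" shows "Q S f V E C = Q S f V' E' C"
proof (rule antisym)
  let ?R = "{e \<in> E. w \<notin> e}"
  have fR: "finite ?R" using finE by simp
  have chE: "changes E g = changes ?R g + changes {{w, p}, {w, q}} g" for g
  proof -
    have "changes E g = changes (?R \<union> {{w, p}, {w, q}}) g" by (rule arg_cong[where f="\<lambda>X. changes X g"], rule E_split)
    also have "\<dots> = changes ?R g + changes {{w, p}, {w, q}} g" by (rule changes_Un[OF fR _ disj1]) simp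
    finally show ?thesis .
  qed
  have chE': "changes E' g = changes ?R g + changes {{p, q}} g" for g
  proof -
    have "changes E' g = changes (?R \<union> {{p, q}}) g" by (rule arg_cong[where f="\<lambda>X. changes X g"], rule E'_split)
    also have "\<dots> = changes ?R g + changes {{p, q}} g" by (rule changes_Un[OF fR _ disj2]) simp
    finally show ?thesis .
  qed
  show "Q S f V E C \<le> Q S f V' E' C" unfolding Q_adm
  proof (rule INF_mono_nat)
    fix b assume b: "b \<in> adm S f V' C"
    define a where "a = b(w := b p)"
    have "p \<in> V'" using pV wp unfolding V'_def by auto
    then have "a \<in> adm S f V C" using b assms unfolding adm_def a_def V'_def by auto
    moreover have "changes E a \<le> changes E' b"
    proof -
      have "changes ?R a = changes ?R b" unfolding a_def by (rule changes_cong) auto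
      moreover have "changes {{w, p}, {w, q}} a \<le> changes {{p, q}} a" using changes_two_le[of a w p q] unfolding a_def using wp by simp
      moreover have "changes {{p, q}} a = changes {{p, q}} b" unfolding a_def using wp wq by (intro changes_cong) auto
      ultimately show ?thesis unfolding chE chE' by simp
    qed
    ultimately show "\<exists>a\<in>adm S f V C. changes E a \<le> changes E' b" by blast
  next
    fix a assume "a \<in> adm S f V C"
    then have "a \<in> adm S f V' C" unfolding adm_def V'_def by auto
    then show "adm S f V' C \<noteq> {}" by blast
  qed
  show "Q S f V' E' C \<le> Q S f V E C" unfolding Q_adm
  proof (rule INF_mono_nat)
    fix b assume b: "b \<in> adm S f V C"
    then have "b \<in> adm S f V' C" unfolding adm_def V'_def by auto
    moreover have "changes E' b \<le> changes E b" unfolding chE chE' using changes_two_ge[OF pq, of b w] by simp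
    ultimately show "\<exists>a\<in>adm S f V' C. changes E' a \<le> changes E b" by blast
  next
    fix a assume a: "a \<in> adm S f V' C"
    have "p \<in> V'" using pV wp unfolding V'_def by auto
    then have "a(w := a p) \<in> adm S f V C" using a assms unfolding adm_def V'_def by auto
    then show "adm S f V C \<noteq> {}" by blast
  qed
qed

lemma pscore_eq: "pscore S f V E = pscore S f V' E'"
proof -
  have "w \<notin> leaves V E" unfolding leaves_def using dw by simp
  then show ?thesis unfolding pscore_Q leaves_eq using Q_eq by metis
qed


lemma path_fwd:
  assumes "u \<noteq> w" "v \<noteq> w" "upath E xs" "hd xs = u" "last xs = v" "\<forall>x\<in>set (butlast (tl xs)). degree E x = 2"
  shows "\<exists>ys. upath E' ys \<and> hd ys = u \<and> last ys = v \<and> (\<forall>x\<in>set (butlast (tl ys)). degree E' x = 2)"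
proof -
  have dx: "distinct xs" "xs \<noteq> []" using assms(3) unfolding upath_def by auto
  have ix: "\<And>x. x \<in> set xs \<Longrightarrow> x \<noteq> u \<Longrightarrow> x \<noteq> v \<Longrightarrow> degree E x = 2"
    using assms(4,5,6) internal_set[OF dx(1)] by blast
  show ?thesis
  proof (cases "w \<in> set xs")
    case False
    have "successively (\<lambda>a b. {a, b} \<in> E') xs" using succ_to_E'[OF _ False] assms(3) unfolding upath_succ by simp
    then have up: "upath E' xs" using dx unfolding upath_succ by simp
    have "\<forall>x\<in>set (butlast (tl xs)). degree E' x = 2"
    proof
      fix x assume "x \<in> set (butlast (tl xs))"
      then have "x \<in> set xs" "x \<noteq> u" "x \<noteq> v" using internal_set[OF dx(1)] assms(4,5) by auto
      then show "degree E' x = 2" using ix deg_eq False by metis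
    qed
    then show ?thesis using up assms(4,5) by blast
  next
    case True
    obtain as bs where ab: "xs = as @ w # bs" "as \<noteq> []" "bs \<noteq> []" "upath E' (as @ bs)"
      using remove_w[OF assms(3) True] assms(1,2,4,5) by metis
    have dy: "distinct (as @ bs)" using ab(4) unfolding upath_def by simp
    have h: "hd (as @ bs) = u" using ab(1,2) assms(4) by simp
    have l: "last (as @ bs) = v" using ab(1,3) assms(5) by simp
    have wn: "w \<notin> set (as @ bs)" using dx(1) ab(1) by simp
    have "\<forall>x\<in>set (butlast (tl (as @ bs))). degree E' x = 2"
    proof
      fix x assume "x \<in> set (butlast (tl (as @ bs)))"
      then have "x \<in> set (as @ bs)" "x \<noteq> u" "x \<noteq> v" using internal_set[OF dy] h l by auto
      moreover then have "x \<in> set xs" "x \<noteq> w" using ab(1) wn by auto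
      ultimately show "degree E' x = 2" using ix deg_eq by metis
    qed
    then show ?thesis using ab(4) h l by blast
  qed
qed

lemma path_bwd:
  assumes "u \<noteq> v" "upath E' ys" "hd ys = u" "last ys = v" "\<forall>x\<in>set (butlast (tl ys)). degree E' x = 2"
  shows "\<exists>xs. upath E xs \<and> hd xs = u \<and> last xs = v \<and> (\<forall>x\<in>set (butlast (tl xs)). degree E x = 2)"
proof -
  have dy: "distinct ys" "ys \<noteq> []" using assms(2) unfolding upath_def by auto
  have wn: "w \<notin> set ys" using w_notin[OF assms(2)] upath_len2[OF assms(2)] assms(1,3,4) by simp
  have iy: "\<And>x. x \<in> set ys \<Longrightarrow> x \<noteq> u \<Longrightarrow> x \<noteq> v \<Longrightarrow> degree E' x = 2"
    using assms(3,4,5) internal_set[OF dy(1)] by blast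
  show ?thesis
  proof (cases "successively (\<lambda>a b. {a, b} \<in> E) ys")
    case True
    then have up: "upath E ys" using dy unfolding upath_succ by simp
    have "\<forall>x\<in>set (butlast (tl ys)). degree E x = 2"
    proof
      fix x assume "x \<in> set (butlast (tl ys))"
      then have "x \<in> set ys" "x \<noteq> u" "x \<noteq> v" using internal_set[OF dy(1)] assms(3,4) by auto
      moreover then have "x \<noteq> w" using wn by auto
      ultimately show "degree E x = 2" using iy deg_eq by metis
    qed
    then show ?thesis using up assms(3,4) by blast
  next
    case False
    obtain as bs where ab: "ys = as @ bs" "as \<noteq> []" "bs \<noteq> []" "{last as, hd bs} = {p, q}"
      using split_E'[OF assms(2) False] by blast
    have up: "upath E (as @ w # bs)" using insert_w[OF _ ab(2,3,4)] assms(2) ab(1) wn by simp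
    have dx: "distinct (as @ w # bs)" using up unfolding upath_def by simp
    have h: "hd (as @ w # bs) = u" using ab(1,2) assms(3) by simp
    have l: "last (as @ w # bs) = v" using ab(1,3) assms(4) by simp
    have "\<forall>x\<in>set (butlast (tl (as @ w # bs))). degree E x = 2"
    proof
      fix x assume "x \<in> set (butlast (tl (as @ w # bs)))"
      then have x: "x \<in> set (as @ w # bs)" "x \<noteq> u" "x \<noteq> v" using internal_set[OF dx] h l by auto
      show "degree E x = 2"
      proof (cases "x = w")
        case True then show ?thesis using dw by simp
      next
        case False
        then have "x \<in> set ys" using x(1) ab(1) by auto
        then show ?thesis using iy x deg_eq False by metis
      qed
    qed
    then show ?thesis using up h l by blast
  qed
qed

lemma suppr_edges_eq: "suppr_edges V' E' = suppr_edges V E"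
proof -
  have sw: "\<And>u. u \<in> suppr_verts V E \<Longrightarrow> u \<noteq> w" unfolding suppr_verts_def using dw by auto
  have iff: "\<And>u v. u \<in> suppr_verts V E \<Longrightarrow> v \<in> suppr_verts V E \<Longrightarrow> u \<noteq> v \<Longrightarrow>
      (\<exists>xs. upath E' xs \<and> hd xs = u \<and> last xs = v \<and> (\<forall>x\<in>set (butlast (tl xs)). degree E' x = 2)) \<longleftrightarrow>
      (\<exists>xs. upath E xs \<and> hd xs = u \<and> last xs = v \<and> (\<forall>x\<in>set (butlast (tl xs)). degree E x = 2))"
  proof -
    fix u v assume uv: "u \<in> suppr_verts V E" "v \<in> suppr_verts V E" "u \<noteq> v"
    show "(\<exists>xs. upath E' xs \<and> hd xs = u \<and> last xs = v \<and> (\<forall>x\<in>set (butlast (tl xs)). degree E' x = 2)) \<longleftrightarrow>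
      (\<exists>xs. upath E xs \<and> hd xs = u \<and> last xs = v \<and> (\<forall>x\<in>set (butlast (tl xs)). degree E x = 2))"
    proof
      assume "\<exists>xs. upath E' xs \<and> hd xs = u \<and> last xs = v \<and> (\<forall>x\<in>set (butlast (tl xs)). degree E' x = 2)"
      then obtain ys where "upath E' ys" "hd ys = u" "last ys = v" "\<forall>x\<in>set (butlast (tl ys)). degree E' x = 2" by blast
      then show "\<exists>xs. upath E xs \<and> hd xs = u \<and> last xs = v \<and> (\<forall>x\<in>set (butlast (tl xs)). degree E x = 2)"
        using path_bwd uv(3) by blast
    next
      assume "\<exists>xs. upath E xs \<and> hd xs = u \<and> last xs = v \<and> (\<forall>x\<in>set (butlast (tl xs)). degree E x = 2)"
      then obtain xs where "upath E xs" "hd xs = u" "last xs = v" "\<forall>x\<in>set (butlast (tl xs)). degree E x = 2" by blast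
      then show "\<exists>xs. upath E' xs \<and> hd xs = u \<and> last xs = v \<and> (\<forall>x\<in>set (butlast (tl xs)). degree E' x = 2)"
        using path_fwd sw uv by blast
    qed
  qed
  show ?thesis unfolding suppr_edges_def suppr_verts_eq
  proof (intro Collect_cong iffI)
    fix e assume "\<exists>u v. e = {u, v} \<and> u \<in> suppr_verts V E \<and> v \<in> suppr_verts V E \<and> u \<noteq> v \<and>
      (\<exists>xs. upath E' xs \<and> hd xs = u \<and> last xs = v \<and> (\<forall>x\<in>set (butlast (tl xs)). degree E' x = 2))"
    then obtain u v where h: "e = {u, v}" "u \<in> suppr_verts V E" "v \<in> suppr_verts V E" "u \<noteq> v"
      "\<exists>xs. upath E' xs \<and> hd xs = u \<and> last xs = v \<and> (\<forall>x\<in>set (butlast (tl xs)). degree E' x = 2)" by blast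
    then have "\<exists>xs. upath E xs \<and> hd xs = u \<and> last xs = v \<and> (\<forall>x\<in>set (butlast (tl xs)). degree E x = 2)"
      using iff[OF h(2,3,4)] by simp
    then show "\<exists>u v. e = {u, v} \<and> u \<in> suppr_verts V E \<and> v \<in> suppr_verts V E \<and> u \<noteq> v \<and>
      (\<exists>xs. upath E xs \<and> hd xs = u \<and> last xs = v \<and> (\<forall>x\<in>set (butlast (tl xs)). degree E x = 2))"
      using h(1-4) by blast
  next
    fix e assume "\<exists>u v. e = {u, v} \<and> u \<in> suppr_verts V E \<and> v \<in> suppr_verts V E \<and> u \<noteq> v \<and>
      (\<exists>xs. upath E xs \<and> hd xs = u \<and> last xs = v \<and> (\<forall>x\<in>set (butlast (tl xs)). degree E x = 2))"
    then obtain u v where h: "e = {u, v}" "u \<in> suppr_verts V E" "v \<in> suppr_verts V E" "u \<noteq> v"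
      "\<exists>xs. upath E xs \<and> hd xs = u \<and> last xs = v \<and> (\<forall>x\<in>set (butlast (tl xs)). degree E x = 2)" by blast
    then have "\<exists>xs. upath E' xs \<and> hd xs = u \<and> last xs = v \<and> (\<forall>x\<in>set (butlast (tl xs)). degree E' x = 2)"
      using iff[OF h(2,3,4)] by simp
    then show "\<exists>u v. e = {u, v} \<and> u \<in> suppr_verts V E \<and> v \<in> suppr_verts V E \<and> u \<noteq> v \<and>
      (\<exists>xs. upath E' xs \<and> hd xs = u \<and> last xs = v \<and> (\<forall>x\<in>set (butlast (tl xs)). degree E' x = 2))"
      using h(1-4) by blast
  qed
qed

end


lemma suppr_base:
  assumes ag: "agraph V E" and nd: "\<forall>v\<in>V. degree E v \<noteq> 2"
  shows "suppr_verts V E = V" "suppr_edges V E = E"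
proof -
  show sv: "suppr_verts V E = V" unfolding suppr_verts_def using nd by auto
  have ug: "ugraph V E" using ag unfolding agraph_def by simp
  show "suppr_edges V E = E"
  proof (intro equalityI subsetI)
    fix e assume "e \<in> suppr_edges V E"
    then obtain u v xs where h: "e = {u, v}" "u \<noteq> v" "upath E xs" "hd xs = u" "last xs = v"
      "\<forall>x\<in>set (butlast (tl xs)). degree E x = 2"
      unfolding suppr_edges_def by blast
    have d: "distinct xs" "xs \<noteq> []" using h(3) unfolding upath_def by auto
    have l2: "length xs \<ge> 2" using upath_len2[OF h(3)] h by simp
    have sV: "set xs \<subseteq> V" using upath_setV[OF ug h(3) l2] .
    have "set (butlast (tl xs)) = {}"
    proof (rule ccontr)
      assume "set (butlast (tl xs)) \<noteq> {}"
      then obtain x where x: "x \<in> set (butlast (tl xs))" by (meson ex_in_conv)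
      then have "x \<in> V" using sV internal_set[OF d(1)] by auto
      then show False using h(6) x nd by blast
    qed
    then have "set xs \<subseteq> {u, v}" using internal_set[OF d(1)] h(4,5) by auto
    then have "card (set xs) \<le> 2" by (metis card_2_iff card_mono finite.emptyI finite.insertI h(2))
    then have "length xs = 2" using l2 distinct_card[OF d(1)] by simp
    then obtain a b where ab: "xs = [a, b]" by (metis (no_types, opaque_lifting) Suc_length_conv length_0_conv numeral_2_eq_2)
    have "{a, b} \<in> E" using h(3) unfolding ab upath_def by auto
    then show "e \<in> E" using ab h by simp
  next
    fix e assume e: "e \<in> E"
    obtain u v where uv: "u \<in> V" "v \<in> V" "u \<noteq> v" "e = {u, v}" using ugraph_edgeE[OF ug e] by metis
    have "upath E [u, v]" using uv e unfolding upath_def by (auto simp: nth_Cons split: nat.splits)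
    moreover have "\<forall>x\<in>set (butlast (tl [u, v])). degree E x = 2" by simp
    ultimately show "e \<in> suppr_edges V E" unfolding suppr_edges_def sv using uv
      by (intro CollectI exI[of _ u] exI[of _ v]) (intro conjI exI[of _ "[u, v]"]; simp)
  qed
qed

lemma supp_pscore:
  "agraph V E \<Longrightarrow> pscore S f V E = pscore S f (suppr_verts V E) (suppr_edges V E)"
proof (induction "card {v \<in> V. degree E v = 2}" arbitrary: V E rule: less_induct)
  case less
  have ug: "ugraph V E" using less.prems unfolding agraph_def by simp
  have finE: "finite E" using ugraph_finiteE[OF ug] .
  show ?case
  proof (cases "\<exists>w\<in>V. degree E w = 2")
    case False
    then show ?thesis using suppr_base[OF less.prems] by simp
  next
    case True
    then obtain w where w: "w \<in> V" "degree E w = 2" by auto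
    then have "card {e \<in> E. w \<in> e} = 2" unfolding degree_def by simp
    then obtain e1 e2 where e12: "{e \<in> E. w \<in> e} = {e1, e2}" "e1 \<noteq> e2" unfolding card_2_iff by blast
    have e1: "e1 \<in> E" "w \<in> e1" and e2: "e2 \<in> E" "w \<in> e2" using e12(1) by blast+
    obtain p where p: "e1 = {w, p}" using ugraph_edge_at[OF ug e1] by metis
    obtain q where q: "e2 = {w, q}" using ugraph_edge_at[OF ug e2] by metis
    have pq: "p \<noteq> q" using e12(2) p q by blast
    interpret st: supstep V E w p q
      using less.prems w e1 e2 p q pq by unfold_locales auto
    have "pscore S f V E = pscore S f st.V' st.E'" by (rule st.pscore_eq)
    also have "\<dots> = pscore S f (suppr_verts st.V' st.E') (suppr_edges st.V' st.E')"
      using less.hyps[OF st.deg2_less st.ag'] .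
    also have "\<dots> = pscore S f (suppr_verts V E) (suppr_edges V E)"
      unfolding st.suppr_verts_eq st.suppr_edges_eq ..
    finally show ?thesis .
  qed
qed

lemma pscore_le_card: assumes "finite E" "f ` leaves V E \<subseteq> S" "S \<noteq> {}" shows "pscore S f V E \<le> card E"
proof -
  obtain g where "g \<in> adm S f V (leaves V E)" "Q S f V E (leaves V E) = changes E g"
    using Q_attained[OF assms(2,3)] by blast
  then show ?thesis unfolding pscore_Q using changes_le_card[OF assms(1)] by simp
qed



lemma tree_facts:
  assumes "tree_on X V E"
  shows "agraph V E" "X \<subseteq> V" "\<forall>y\<in>X. degree E y \<le> 1" "leaves V E = X" "finite E" "finite V"
proof -
  show ag: "agraph V E" using assms unfolding tree_on_def utree_def agraph_def by auto
  show "X \<subseteq> V" "\<forall>y\<in>X. degree E y \<le> 1" "leaves V E = X" using assms unfolding tree_on_def leaves_def by auto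
  show "finite E" using ugraph_finiteE ag unfolding agraph_def by auto
  show "finite V" using ag unfolding agraph_def ugraph_def by auto
qed

theorem mainTheorem4:
  fixes X Y V1 V2 :: "'v set" and E1 E2 :: "'v set set" and t :: enat
  assumes "tree_on X V1 E1" and "tree_on X V2 E2" and "Y \<subseteq> X" and "t \<ge> 2"
  shows "dMP t Y (span_verts E1 Y) (span_edges E1 Y) (span_verts E2 Y) (span_edges E2 Y)
           = dMP t Y (restr_verts E1 Y) (restr_edges E1 Y) (restr_verts E2 Y) (restr_edges E2 Y)
       \<and> dMP t Y (restr_verts E1 Y) (restr_edges E1 Y) (restr_verts E2 Y) (restr_edges E2 Y)
           \<le> dMP t X V1 E1 V2 E2"
proof -
  note t1 = tree_facts[OF assms(1)] and t2 = tree_facts[OF assms(2)]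
  have YV1: "Y \<subseteq> V1" and YV2: "Y \<subseteq> V2" using t1(2) t2(2) assms(3) by auto
  have p1: "pscore S f (span_verts E1 Y) (span_edges E1 Y) = pscore S f (restr_verts E1 Y) (restr_edges E1 Y)" for S and f :: "'v \<Rightarrow> nat"
    unfolding restr_verts_def restr_edges_def by (rule supp_pscore[OF agraph_span[OF t1(1) YV1]])
  have p2: "pscore S f (span_verts E2 Y) (span_edges E2 Y) = pscore S f (restr_verts E2 Y) (restr_edges E2 Y)" for S and f :: "'v \<Rightarrow> nat"
    unfolding restr_verts_def restr_edges_def by (rule supp_pscore[OF agraph_span[OF t2(1) YV2]])
  have eq: "dMP t Y (span_verts E1 Y) (span_edges E1 Y) (span_verts E2 Y) (span_edges E2 Y)
           = dMP t Y (restr_verts E1 Y) (restr_edges E1 Y) (restr_verts E2 Y) (restr_edges E2 Y)"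
    unfolding dMP_def p1 p2 ..
  let ?A = "{nat \<bar>int (pscore S f (span_verts E1 Y) (span_edges E1 Y)) - int (pscore S f (span_verts E2 Y) (span_edges E2 Y))\<bar> | S f. t_states t S \<and> f ` Y \<subseteq> S}"
  let ?B = "{nat \<bar>int (pscore S f V1 E1) - int (pscore S f V2 E2)\<bar> | S f. t_states t S \<and> f ` X \<subseteq> S}"
  have bdd: "bdd_above ?B"
  proof (rule bdd_aboveI)
    fix b assume "b \<in> ?B"
    then obtain S f where b: "b = nat \<bar>int (pscore S f V1 E1) - int (pscore S f V2 E2)\<bar>" "t_states t S" "f ` X \<subseteq> S" by blast
    have "S \<noteq> {}" using b(2) unfolding t_states_def by simp
    then have "pscore S f V1 E1 \<le> card E1" "pscore S f V2 E2 \<le> card E2"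
      using pscore_le_card t1(4,5) t2(4,5) b(3) by metis+
    then show "b \<le> card E1 + card E2" using b(1) by linarith
  qed
  have le: "Sup ?A \<le> Sup ?B"
  proof (cases "?A = {}")
    case e: True show ?thesis unfolding e by simp
  next
    case False
    show ?thesis
    proof (rule cSup_least[OF False])
      fix a assume "a \<in> ?A"
      then obtain S f where a: "a = nat \<bar>int (pscore S f (span_verts E1 Y) (span_edges E1 Y)) - int (pscore S f (span_verts E2 Y) (span_edges E2 Y))\<bar>"
        "t_states t S" "f ` Y \<subseteq> S" by blast
      have S: "S \<noteq> {}" using a(2) unfolding t_states_def by simp
      have q1: "Q S f V1 E1 Y = pscore S f (span_verts E1 Y) (span_edges E1 Y)" using Q_span_eq[OF assms(1,3) S a(3)] .
      have q2: "Q S f V2 E2 Y = pscore S f (span_verts E2 Y) (span_edges E2 Y)" using Q_span_eq[OF assms(2,3) S a(3)] .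
      have finD: "finite (X - Y)" using t1(6) t1(2) finite_subset by blast
      have hD: "\<And>x. x \<in> X - Y \<Longrightarrow> x \<in> V1 \<and> x \<in> V2 \<and> degree E1 x \<le> 1 \<and> degree E2 x \<le> 1"
        using t1(2,3) t2(2,3) by blast
      obtain f' where f': "f' ` (Y \<union> (X - Y)) \<subseteq> S"
        "\<bar>int (Q S f V1 E1 Y) - int (Q S f V2 E2 Y)\<bar> \<le> \<bar>int (Q S f' V1 E1 (Y \<union> (X - Y))) - int (Q S f' V2 E2 (Y \<union> (X - Y)))\<bar>"
        using greedy[OF finD S t1(5) t2(5) hD, of Y f] a(3) by blast
      have YX: "Y \<union> (X - Y) = X" using assms(3) by blast
      have r1: "Q S f' V1 E1 X = pscore S f' V1 E1" unfolding pscore_Q t1(4) ..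
      have r2: "Q S f' V2 E2 X = pscore S f' V2 E2" unfolding pscore_Q t2(4) ..
      define b where "b = nat \<bar>int (pscore S f' V1 E1) - int (pscore S f' V2 E2)\<bar>"
      have "b \<in> ?B" unfolding b_def using a(2) f'(1) YX by blast
      then have "b \<le> Sup ?B" using bdd by (rule cSup_upper)
      moreover have "a \<le> b" unfolding a(1) b_def using f'(2) unfolding YX q1 q2 r1 r2 by simp
      ultimately show "a \<le> Sup ?B" by simp
    qed
  qed
  have "dMP t Y (span_verts E1 Y) (span_edges E1 Y) (span_verts E2 Y) (span_edges E2 Y) \<le> dMP t X V1 E1 V2 E2"
    unfolding dMP_def using le .
  then show ?thesis using eq by simp
qed

end
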